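(* Let $n$ be a positive integer with at least two distinct prime factors, let $q_1$ be the largest prime smaller than $n$, and write $n=\prod_i p_i^{e_i}$; let $p_1^{a_1}$ be the largest and $p_2^{a_2}$ the second largest of the prime powers $p_i^{e_i}$ in this factorization ($p_1\neq p_2$). If $p_1^{a_1}p_2^{a_2}>n-q_1$, then $n$ satisfies the 3-variation of Condition 1 with $p_1$, $p_2$ and $q_1$.
   Context: A positive integer $n$ satisfies the $N$-variation of Condition 1 with primes $p_1,\dots,p_N$ if these are $N$ different primes and for every $1\le k\le n-1$, $\binom{n}{k}$ is divisible by at least one of $p_1,\dots,p_N$. Here "largest prime-power divisor" and "second largest prime-power divisor" refer to the maximal prime powers $p_i^{e_i}$ exactly dividing $n$. *)

theory Defs
  imports "HOL-Computational_Algebra.Primes"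
begin

definition cond1_var :: "nat \<Rightarrow> nat \<Rightarrow> nat set \<Rightarrow> bool" where
  "cond1_var n N P \<longleftrightarrow> finite P \<and> card P = N \<and> (\<forall>p\<in>P. prime p) \<and>
     (\<forall>k. 1 \<le> k \<and> k \<le> n - 1 \<longrightarrow> (\<exists>p\<in>P. p dvd (n choose k)))"

end

theory Submission
  imports Defs Complex_Main "HOL-Library.Discrete_Functions"
begin


lemma div_Suc_ind:
  fixes k :: nat assumes "k > 0"
  shows "Suc n div k = n div k + (if k dvd Suc n then 1 else 0)"
  using assms by (auto simp: div_Suc dvd_eq_mod_eq_0)

lemma pow_gt_self: fixes p :: nat assumes "prime p" shows "n < p ^ n"
proof -
  have "p \<ge> 2" using assms prime_ge_2_nat by blast
  have "n < 2 ^ n" by (rule less_exp)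
  also have "\<dots> \<le> p ^ n" using \<open>p \<ge> 2\<close> by (simp add: power_mono)
  finally show ?thesis .
qed

lemma legendre:
  fixes p :: nat assumes p: "prime p"
  shows "multiplicity p (fact n) = (\<Sum>i=1..n. n div p ^ i)"
proof (induction n)
  case 0
  then show ?case by simp
next
  case (Suc n)
  have pos: "\<And>i. p ^ i > 0" using p prime_gt_0_nat by simp
  define v where "v = multiplicity p (Suc n)"
  have "multiplicity p (fact (Suc n) :: nat) = multiplicity p (Suc n * fact n)"
    by (simp add: fact_Suc)
  also have "\<dots> = v + multiplicity p (fact n :: nat)"
    unfolding v_def using p by (intro prime_elem_multiplicity_mult_distrib) auto
  finally have e1: "multiplicity p (fact (Suc n) :: nat) = v + (\<Sum>i=1..n. n div p ^ i)"
    using Suc by simp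
  have e2: "(\<Sum>i=1..n. n div p ^ i) = (\<Sum>i=1..Suc n. n div p ^ i)"
    using pow_gt_self[OF p, of "Suc n"] by simp
  have "(\<Sum>i=1..Suc n. Suc n div p ^ i) = (\<Sum>i=1..Suc n. n div p ^ i + (if p ^ i dvd Suc n then 1 else 0))"
    using pos by (intro sum.cong refl div_Suc_ind) auto
  also have "\<dots> = (\<Sum>i=1..Suc n. n div p ^ i) + (\<Sum>i=1..Suc n. (if p ^ i dvd Suc n then 1 else 0))"
    by (simp add: sum.distrib)
  also have "(\<Sum>i=1..Suc n. (if p ^ i dvd Suc n then 1 else 0)) = card {i\<in>{1..Suc n}. p ^ i dvd Suc n}"
  proof -
    have "(\<Sum>i\<in>{i\<in>{1..Suc n}. p ^ i dvd Suc n}. (1::nat)) = (\<Sum>i=1..Suc n. (if p ^ i dvd Suc n then 1 else 0))"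
      by (rule sum.inter_filter) simp
    thus ?thesis by simp
  qed
  also have "{i\<in>{1..Suc n}. p ^ i dvd Suc n} = {1..v}"
  proof -
    have "p ^ v dvd Suc n" unfolding v_def by (rule multiplicity_dvd)
    hence "p ^ v \<le> Suc n" by (rule dvd_imp_le) simp
    hence "v < Suc (Suc n)" using pow_gt_self[OF p, of v] by linarith
    moreover have iff: "\<And>i. p ^ i dvd Suc n \<longleftrightarrow> i \<le> v"
      unfolding v_def using p by (intro power_dvd_iff_le_multiplicity) auto
    ultimately have "\<And>i. i \<in> {i\<in>{1..Suc n}. p ^ i dvd Suc n} \<longleftrightarrow> i \<in> {1..v}"
      by (simp only: mem_Collect_eq atLeastAtMost_iff iff) linarith
    thus ?thesis by blast
  qed
  finally show ?case using e1 e2 by simp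
qed
lemma term_le1: fixes n k :: nat assumes "k > 0"
  shows "2 * (n div k) \<le> 2 * n div k" and "2 * n div k - 2 * (n div k) \<le> 1"
proof -
  obtain q r where qr: "n = q * k + r" "r < k" using assms
    by (metis div_mult_mod_eq mod_less_divisor)
  have eq: "2 * n = 2 * r + (2 * q) * k" using qr by simp
  have a: "n div k = q" using qr by simp
  have "2 * n div k = 2 * q + (2 * r) div k"
    unfolding eq using assms by (metis div_mult_self1 neq0_conv)
  moreover have "(2 * r) div k < 2" using qr assms by (simp add: div_less_iff_less_mult)
  ultimately show "2 * (n div k) \<le> 2 * n div k" and "2 * n div k - 2 * (n div k) \<le> 1"
    using a by simp_all
qed

lemma binom_mult:
  fixes p n :: nat assumes p: "prime p"
  shows "multiplicity p ((2*n) choose n) = (\<Sum>i=1..2*n. 2*n div p^i - 2 * (n div p^i))"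
proof -
  have pos: "\<And>i. p ^ i > 0" using p prime_gt_0_nat by simp
  have "fact n * fact (2*n - n) * ((2*n) choose n) = (fact (2*n) :: nat)"
    by (rule binomial_fact_lemma) simp
  hence "fact n * fact n * ((2*n) choose n) = (fact (2*n) :: nat)" by simp
  hence "multiplicity p (fact (2*n) :: nat) = multiplicity p (fact n * fact n * ((2*n) choose n) :: nat)"
    by simp
  also have "\<dots> = multiplicity p (fact n :: nat) + multiplicity p (fact n :: nat) + multiplicity p ((2*n) choose n)"
    using p by (simp add: prime_elem_multiplicity_mult_distrib)
  finally have e: "(\<Sum>i=1..2*n. 2*n div p^i) = 2 * (\<Sum>i=1..n. n div p^i) + multiplicity p ((2*n) choose n)"
    using legendre[OF p] by simp
  have "(\<Sum>i=1..n. n div p^i) = (\<Sum>i=1..2*n. n div p^i)"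
  proof (rule sum.mono_neutral_left)
    show "\<forall>i\<in>{1..2 * n} - {1..n}. n div p ^ i = 0"
    proof
      fix i assume "i \<in> {1..2 * n} - {1..n}"
      hence "n < i" by auto
      hence "p ^ n < p ^ i" using p prime_gt_1_nat power_strict_increasing by blast
      hence "n < p ^ i" using pow_gt_self[OF p, of n] by linarith
      thus "n div p ^ i = 0" by simp
    qed
  qed auto
  hence e2: "2 * (\<Sum>i=1..n. n div p^i) = (\<Sum>i=1..2*n. 2 * (n div p^i))"
    by (simp add: sum_distrib_left)
  have "(\<Sum>i=1..2*n. 2*n div p^i - 2 * (n div p^i)) = (\<Sum>i=1..2*n. 2*n div p^i) - (\<Sum>i=1..2*n. 2 * (n div p^i))"
    using term_le1(1)[OF pos] by (intro sum_subtractf_nat) auto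
  thus ?thesis using e e2 by simp
qed

lemma binom_pow_le:
  fixes p n :: nat assumes p: "prime p" and n: "n > 0"
  shows "p ^ multiplicity p ((2*n) choose n) \<le> 2 * n"
proof (rule ccontr)
  define v where "v = multiplicity p ((2*n) choose n)"
  define t where "t = (\<lambda>i. 2*n div p^i - 2 * (n div p^i))"
  have pos: "\<And>i. p ^ i > 0" using p prime_gt_0_nat by simp
  assume "\<not> p ^ multiplicity p ((2*n) choose n) \<le> 2 * n"
  hence big: "2 * n < p ^ v" unfolding v_def by simp
  have "v = (\<Sum>i=1..2*n. t i)" unfolding v_def t_def by (rule binom_mult[OF p])
  also have "\<dots> = (\<Sum>i\<in>{1..2*n} \<inter> {..<v}. t i)"
  proof (rule sum.mono_neutral_right)
    show "\<forall>i\<in>{1..2 * n} - {1..2 * n} \<inter> {..<v}. t i = 0"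
    proof
      fix i assume "i \<in> {1..2 * n} - {1..2 * n} \<inter> {..<v}"
      hence "v \<le> i" by auto
      hence "p ^ v \<le> p ^ i" using p prime_gt_0_nat power_increasing by (metis One_nat_def Suc_leI)
      hence "2 * n < p ^ i" "n < p ^ i" using big by linarith+
      thus "t i = 0" unfolding t_def by simp
    qed
  qed auto
  also have "\<dots> \<le> (\<Sum>i\<in>{1..2*n} \<inter> {..<v}. 1)"
    unfolding t_def using term_le1(2)[OF pos] by (intro sum_mono) auto
  also have "\<dots> = card ({1..2*n} \<inter> {..<v})" by simp
  also have "\<dots> \<le> card {1..<v}" by (intro card_mono) auto
  also have "\<dots> = v - 1" by simp
  finally have "v \<le> v - 1" .
  moreover have "v \<noteq> 0"
  proof
    assume "v = 0" with big n show False by simp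
  qed
  ultimately show False by linarith
qed

lemma binom_mid:
  fixes p n :: nat assumes p: "prime p" and n: "n \<ge> 5" and "p \<le> n" and "2 * n < 3 * p"
  shows "multiplicity p ((2*n) choose n) = 0"
proof -
  have pos: "\<And>i. p ^ i > 0" using p prime_gt_0_nat by simp
  have sq: "2 * n < p ^ 2"
  proof -
    have "(2*n+1)^2 \<le> (3*p)^2" using assms(4) by (intro power_mono) auto
    hence "4*n*n + 4*n + 1 \<le> 9 * (p*p)" by (simp add: power2_eq_square algebra_simps)
    moreover have "4*n*n \<ge> 20 * n" using n by simp
    ultimately have "18 * n < 9 * (p * p)" by linarith
    thus ?thesis by (simp add: power2_eq_square)
  qed
  have "multiplicity p ((2*n) choose n) = (\<Sum>i=1..2*n. 2*n div p^i - 2 * (n div p^i))"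
    by (rule binom_mult[OF p])
  also have "\<dots> = (\<Sum>i=1..2*n. (0::nat))"
  proof (rule sum.cong[OF refl])
    fix i assume i: "i \<in> {1..2*n}"
    show "2*n div p^i - 2 * (n div p^i) = 0"
    proof (cases "i = 1")
      case True
      have "n div p = 1" by (rule div_nat_eqI) (use assms in simp_all)
      moreover have "2 * n div p = 2" by (rule div_nat_eqI) (use assms in simp_all)
      ultimately show ?thesis using True by simp
    next
      case False
      hence "i \<ge> 2" using i by auto
      hence "p ^ 2 \<le> p ^ i" using p prime_gt_0_nat power_increasing by (metis One_nat_def Suc_leI)
      hence "2 * n < p ^ i" "n < p ^ i" using sq by linarith+
      thus ?thesis by simp
    qed
  qed
  finally show ?thesis by simp
qed


lemma prod_primes_dvd:
  fixes x :: nat assumes "finite A" "\<forall>p\<in>A. prime p \<and> p dvd x"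
  shows "\<Prod>A dvd x"
  using assms
proof (induction A rule: finite_induct)
  case empty then show ?case by simp
next
  case (insert a A)
  have "coprime a (\<Prod>A)"
    using insert by (intro prod_coprime_right primes_coprime) auto
  moreover have "a dvd x" "\<Prod>A dvd x" using insert by auto
  ultimately show ?case using insert(1,2) by (simp add: divides_mult)
qed

lemma primorial_le: "(\<Prod>{p::nat. prime p \<and> p \<le> m}) \<le> 4 ^ m"
proof (induction m rule: less_induct)
  case (less m)
  define S where "S = (\<lambda>m. {p::nat. prime p \<and> p \<le> m})"
  have finS: "\<And>m. finite (S m)" unfolding S_def by (rule finite_subset[of _ "{..m}" for m]) auto
  show ?case
  proof (cases "m \<le> 2")
    case True
    show ?thesis
    proof (cases "m = 2")
      case True
      have "S m = {2}" unfolding S_def True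
      proof (intro set_eqI iffI)
        fix p assume "p \<in> {p::nat. prime p \<and> p \<le> 2}"
        with prime_ge_2_nat[of p] show "p \<in> {2}" by simp
      qed simp
      hence "\<Prod>(S m) \<le> 4 ^ m" using True by simp
      thus ?thesis unfolding S_def .
    next
      case False
      have "S m = {}" unfolding S_def
      proof (intro set_eqI iffI)
        fix p assume "p \<in> {p::nat. prime p \<and> p \<le> m}"
        with prime_ge_2_nat[of p] \<open>m \<le> 2\<close> False show "p \<in> {}" by simp
      qed simp
      hence "\<Prod>(S m) \<le> 4 ^ m" by simp
      thus ?thesis unfolding S_def .
    qed
  next
    case False
    show ?thesis
    proof (cases "even m")
      case True
      have "S m = S (m - 1)" unfolding S_def
      proof (intro Collect_cong iffI conjI)
        fix p assume "prime p \<and> p \<le> m"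
        moreover have "p \<noteq> m"
        proof
          assume "p = m"
          with calculation have "prime m" by simp
          with prime_odd_nat[of m] True False show False by simp
        qed
        ultimately show "prime p" "p \<le> m - 1" by auto
      qed auto
      hence "\<Prod>(S m) \<le> 4 ^ (m-1)" using less[of "m-1"] False unfolding S_def by simp
      also have "\<dots> \<le> 4 ^ m" by (intro power_increasing) auto
      finally show ?thesis unfolding S_def .
    next
      case odd: False
      then obtain k where k: "m = 2 * k + 1" by (metis oddE)
      have "k \<ge> 1" using k False by simp
      define T where "T = {p. prime p \<and> k + 1 < p \<and> p \<le> 2 * k + 1}"
      have "S m = S (k + 1) \<union> T" unfolding S_def T_def k by auto
      moreover have "S (k+1) \<inter> T = {}" unfolding S_def T_def by auto
      moreover have finT: "finite T" unfolding T_def by (rule finite_subset[of _ "{..2*k+1}"]) auto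
      ultimately have "\<Prod>(S m) = \<Prod>(S (k+1)) * \<Prod>T"
        using finS by (simp add: prod.union_disjoint)
      moreover have "\<Prod>(S (k+1)) \<le> 4 ^ (k+1)" using less[of "k+1"] k \<open>k\<ge>1\<close> unfolding S_def by simp
      moreover have "\<Prod>T \<le> 4 ^ k"
      proof -
        have fl: "fact (k+1) * fact (2*k+1 - (k+1)) * ((2*k+1) choose (k+1)) = (fact (2*k+1) :: nat)"
          by (rule binomial_fact_lemma) simp
        have "\<Prod>T dvd ((2*k+1) choose (k+1))"
        proof (rule prod_primes_dvd[OF finT], rule ballI)
          fix p assume "p \<in> T"
          hence p: "prime p" "k + 1 < p" "p \<le> 2*k+1" unfolding T_def by auto
          have "p dvd (fact (2*k+1) :: nat)" using p prime_dvd_fact_iff[of p "2*k+1"] by blast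
          hence "p dvd fact (k+1) * fact k * ((2*k+1) choose (k+1))" using fl by simp
          moreover have "\<not> p dvd (fact (k+1) :: nat)" "\<not> p dvd (fact k :: nat)"
            using p prime_dvd_fact_iff[of p "k+1"] prime_dvd_fact_iff[of p k] by auto
          ultimately show "prime p \<and> p dvd ((2*k+1) choose (k+1))"
            using p by (simp add: prime_dvd_mult_iff)
        qed
        hence "\<Prod>T \<le> ((2*k+1) choose (k+1))" by (rule dvd_imp_le) simp
        also have "\<dots> = ((2*k+1) choose k)"
          using binomial_symmetric[of k "2*k+1"] by simp
        also have "\<dots> \<le> (\<Sum>i\<le>k. (2*k+1) choose i)"
          by (rule member_le_sum) auto
        also have "\<dots> = 4 ^ k" using binomial_r_part_sum[of k] by (simp add: power_mult)
        finally show ?thesis .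
      qed
      ultimately have "\<Prod>(S m) \<le> 4 ^ (k+1) * 4 ^ k" by (simp add: mult_le_mono)
      also have "\<dots> = 4 ^ m" using k by (simp add: power_add[symmetric])
      finally show ?thesis unfolding S_def .
    qed
  qed
qed


lemma pow6: fixes s :: nat assumes "31 \<le> s" shows "(s+1)^6 \<le> 2^(s-1)"
  using assms
proof (induction s rule: dec_induct)
  case base
  then show ?case by simp
next
  case (step s)
  define X where "X = (s+2)^6"
  define Y where "Y = (s+1)^6"
  have "32 * (s + 2) \<le> 33 * (s + 1)" using step(1) by simp
  hence "(32 * (s + 2))^6 \<le> (33 * (s + 1))^6" by (rule power_mono) simp
  hence "32^6 * X \<le> 33^6 * Y" unfolding X_def Y_def by (simp only: power_mult_distrib)
  also have "\<dots> \<le> (2 * 32^6) * Y" by (rule mult_le_mono1) simp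
  finally have "(32^6) * X \<le> (32^6) * (2 * Y)" by (simp only: mult.assoc mult.commute mult.left_commute)
  hence "X \<le> 2 * Y" by simp
  hence "(s+2)^6 \<le> 2 * (s+1)^6" unfolding X_def Y_def .
  also have "\<dots> \<le> 2 * 2^(s-1)" using step by simp
  also have "\<dots> = 2 ^ (Suc s - 1)" using step(1) by (cases s) auto
  finally show ?case by simp
qed

lemma big_ineq: fixes N :: nat assumes "1024 \<le> N"
  shows "N ^ (3 * (floor_sqrt N + 1)) < 2 ^ N"
proof -
  define s where "s = floor_sqrt N"
  have s1: "s\<^sup>2 \<le> N" "N < (s+1)^2" unfolding s_def
    using floor_sqrt_power2_le Suc_floor_sqrt_power2_gt by auto
  have "32 \<le> s" unfolding s_def by (rule le_floor_sqrtI) (use assms in simp)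
  have "N ^ (3 * (s + 1)) < ((s+1)^2) ^ (3 * (s+1))"
    by (rule power_strict_mono) (use s1 in simp_all)
  also have "\<dots> = ((s+1)^6)^(s+1)" unfolding power_mult[symmetric] by (intro arg_cong[where f="\<lambda>e. (s+1)^e"]) simp
  also have "\<dots> \<le> (2^(s-1))^(s+1)" by (rule power_mono) (use pow6[of s] \<open>32 \<le> s\<close> in simp_all)
  also have "\<dots> = 2 ^ ((s-1)*(s+1))" by (simp only: power_mult)
  also have "\<dots> \<le> 2 ^ N"
  proof (intro power_increasing)
    define t where "t = s - 1"
    have t: "s = t + 1" using \<open>32 \<le> s\<close> unfolding t_def by simp
    have "(s-1)*(s+1) \<le> s * s" unfolding t by (simp add: algebra_simps)
    thus "(s-1)*(s+1) \<le> N" using s1 by (simp add: power2_eq_square)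
  qed (rule one_le_numeral)
  finally show ?thesis unfolding s_def .
qed


lemma central_nat: fixes n :: nat assumes "n > 0" shows "4 ^ n \<le> ((2*n) choose n) * (2*n)"
proof -
  have "4^n / (2*real n) \<le> real ((2*n) choose n)" by (rule central_binomial_lower_bound[OF assms])
  hence "real (4^n) \<le> real ((2*n) choose n) * (2 * real n)" using assms by (simp add: field_simps)
  hence "real (4^n) \<le> real (((2*n) choose n) * (2*n))" by simp
  thus ?thesis by (simp only: of_nat_le_iff)
qed

lemma bertrand_large: fixes n :: nat assumes n: "512 \<le> n"
  shows "\<exists>p. prime p \<and> n < p \<and> p \<le> 2 * n"
proof (rule ccontr)
  assume "\<not> ?thesis"
  hence noP: "\<And>p. prime p \<Longrightarrow> n < p \<Longrightarrow> 2 * n < p" by auto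
  define C where "C = (2*n) choose n"
  have Cpos: "C > 0" unfolding C_def by simp
  define PF where "PF = prime_factors C"
  define v where "v = (\<lambda>p. multiplicity p C)"
  define s where "s = floor_sqrt (2*n)"
  define m where "m = 2 * n div 3"
  have finPF: "finite PF" unfolding PF_def by simp
  have Cprod: "C = (\<Prod>p\<in>PF. p ^ v p)" unfolding PF_def v_def by (rule prime_factorization_nat[OF Cpos])
  have fl: "fact n * fact (2*n - n) * C = (fact (2*n) :: nat)"
    unfolding C_def by (rule binomial_fact_lemma) simp
  have PFp: "prime p \<and> 3 * p \<le> 2 * n \<and> 1 \<le> v p" if "p \<in> PF" for p
  proof -
    have p: "prime p" "p dvd C" using that unfolding PF_def by auto
    have "v p > 0" using p Cpos unfolding v_def by (simp add: prime_multiplicity_gt_zero_iff)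
    have "C dvd fact (2*n)" using fl by (metis dvd_triv_right)
    hence "p dvd fact (2*n)" using p(2) by (rule dvd_trans[rotated])
    hence "p \<le> 2 * n" using p(1) prime_dvd_fact_iff by blast
    hence "p \<le> n" using noP[OF p(1)] by linarith
    have "3 * p \<le> 2 * n"
    proof (rule ccontr)
      assume "\<not> 3 * p \<le> 2 * n"
      hence "v p = 0" unfolding v_def C_def using n \<open>p \<le> n\<close> p(1) by (intro binom_mid) auto
      with \<open>v p > 0\<close> show False by simp
    qed
    with p \<open>v p > 0\<close> show ?thesis by simp
  qed
  define X where "X = {p::nat. p * p \<le> 2 * n}"
  have "C = (\<Prod>p\<in>PF \<inter> X. p ^ v p) * (\<Prod>p\<in>PF - X. p ^ v p)"
    unfolding Cprod using finPF by (rule prod.Int_Diff)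
  moreover have "(\<Prod>p\<in>PF \<inter> X. p ^ v p) \<le> (2*n) ^ s"
  proof -
    have "(\<Prod>p\<in>PF \<inter> X. p ^ v p) \<le> (\<Prod>p\<in>PF \<inter> X. 2 * n)"
    proof (rule prod_mono)
      fix p assume "p \<in> PF \<inter> X"
      hence "prime p" using PFp by auto
      thus "0 \<le> p ^ v p \<and> p ^ v p \<le> 2 * n" unfolding v_def C_def using binom_pow_le n by simp
    qed
    also have "\<dots> = (2*n) ^ card (PF \<inter> X)" by simp
    also have "\<dots> \<le> (2*n) ^ s"
    proof (rule power_increasing)
      have "PF \<inter> X \<subseteq> {1..s}"
      proof
        fix p assume p: "p \<in> PF \<inter> X"
        hence "prime p" using PFp by auto
        hence "1 \<le> p" using prime_ge_1_nat by blast
        moreover have "p \<le> s" unfolding s_def using p by (intro le_floor_sqrtI) (simp add: X_def power2_eq_square)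
        ultimately show "p \<in> {1..s}" by simp
      qed
      hence "card (PF \<inter> X) \<le> card {1..s}" by (intro card_mono) auto
      thus "card (PF \<inter> X) \<le> s" by simp
    qed (use n in simp)
    finally show ?thesis .
  qed
  moreover have "(\<Prod>p\<in>PF - X. p ^ v p) \<le> 4 ^ m"
  proof -
    have "(\<Prod>p\<in>PF - X. p ^ v p) = (\<Prod>p\<in>PF - X. p)"
    proof (rule prod.cong[OF refl])
      fix p assume p: "p \<in> PF - X"
      hence pp: "prime p" "1 \<le> v p" using PFp by auto
      have "p ^ v p \<le> 2 * n" unfolding v_def C_def using binom_pow_le n pp by simp
      also have "\<dots> < p ^ 2" using p unfolding X_def by (simp add: power2_eq_square)
      finally have "v p < 2" using pp(1) prime_gt_1_nat power_less_imp_less_exp by blast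
      with pp have "v p = 1" by simp
      thus "p ^ v p = p" by simp
    qed
    also have "\<dots> \<le> \<Prod>{p::nat. prime p \<and> p \<le> m}"
    proof (rule dvd_imp_le)
      show "(\<Prod>p\<in>PF - X. p) dvd \<Prod>{p::nat. prime p \<and> p \<le> m}"
      proof (rule prod_dvd_prod_subset)
        show "finite {p::nat. prime p \<and> p \<le> m}" by (rule finite_subset[of _ "{..m}"]) auto
        show "PF - X \<subseteq> {p. prime p \<and> p \<le> m}" using PFp unfolding m_def by fastforce
      qed
      show "0 < \<Prod>{p::nat. prime p \<and> p \<le> m}" by (rule prod_pos) (use prime_gt_0_nat in blast)
    qed
    also have "\<dots> \<le> 4 ^ m" by (rule primorial_le)
    finally show ?thesis .
  qed
  ultimately have "C \<le> (2*n) ^ s * 4 ^ m" by (metis mult_le_mono)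
  hence A: "C * (2*n) \<le> (2*n) ^ (s+1) * 4 ^ m" by (simp add: algebra_simps)
  have "4 ^ n \<le> C * (2*n)" using central_nat[of n] n unfolding C_def by simp
  hence "4 ^ n \<le> (2*n) ^ (s+1) * 4 ^ m" using A by (rule order_trans)
  moreover have "(4::nat) ^ n = 4 ^ (n - m) * 4 ^ m"
  proof -
    have "m \<le> n" unfolding m_def by simp
    hence "n = (n - m) + m" by simp
    thus ?thesis by (metis power_add)
  qed
  ultimately have "4 ^ (n - m) \<le> (2*n) ^ (s+1)" by simp
  hence "(4 ^ (n - m)) ^ 3 \<le> ((2*n) ^ (s+1)) ^ 3" by (rule power_mono) simp
  hence "4 ^ (3 * (n - m)) \<le> (2*n) ^ (3 * (s+1))" by (simp only: power_mult[symmetric] mult.commute)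
  moreover have "(4::nat) ^ n \<le> 4 ^ (3 * (n - m))" by (rule power_increasing) (simp_all add: m_def)
  moreover have "(4::nat) ^ n = 2 ^ (2 * n)" by (simp add: power_mult)
  ultimately have "2 ^ (2 * n) \<le> (2*n) ^ (3 * (s+1))" by simp
  moreover have "(2*n) ^ (3 * (s+1)) < 2 ^ (2 * n)" unfolding s_def by (rule big_ineq) (use n in simp)
  ultimately show False by simp
qed


lemma sm: fixes p :: nat assumes "1 < p" "p < b*b" "\<forall>d\<in>set [2..<b]. \<not> d dvd p" shows "prime p"
proof (rule ccontr)
  assume "\<not> prime p"
  then obtain d where d: "d dvd p" "d \<noteq> 1" "d \<noteq> p" using assms(1) unfolding prime_nat_iff by auto
  then obtain e where e: "p = d * e" by blast
  have "d \<noteq> 0" using e assms(1) by (cases "d = 0") auto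
  have "e \<noteq> 0" using e assms(1) by (cases "e = 0") auto
  have "e \<noteq> 1" using e d by auto
  have "d \<ge> 2" "e \<ge> 2" using \<open>d \<noteq> 0\<close> \<open>e \<noteq> 0\<close> \<open>e \<noteq> 1\<close> d(2) by auto
  have "d < b \<or> e < b" using assms(2) e by (metis mult_le_mono not_less)
  thus False
  proof
    assume "d < b" hence "d \<in> set [2..<b]" using \<open>d\<ge>2\<close> by simp
    with assms(3) have "\<not> d dvd p" by blast
    with e show False by simp
  next
    assume "e < b" hence "e \<in> set [2..<b]" using \<open>e\<ge>2\<close> by simp
    with assms(3) have "\<not> e dvd p" by blast
    with e show False by simp
  qed
qed

lemma bstep: fixes n p a :: nat assumes "prime p" "a \<le> n" "n < p" "p \<le> 2 * a"
  shows "\<exists>p. prime p \<and> n < p \<and> p \<le> 2 * n"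
  using assms by (intro exI[of _ p]) auto

lemma bertrand: fixes n :: nat assumes "1 \<le> n" shows "\<exists>p. prime p \<and> n < p \<and> p \<le> 2 * n"
proof -
  have p2: "prime (2::nat)" by simp
  have p3: "prime (3::nat)" by (rule sm[where b=2]) simp_all
  have p5: "prime (5::nat)" by (rule sm[where b=3]) (simp_all add: upt_rec)
  have p7: "prime (7::nat)" by (rule sm[where b=3]) (simp_all add: upt_rec)
  have p13: "prime (13::nat)" by (rule sm[where b=4]) (simp_all add: upt_rec)
  have p23: "prime (23::nat)" by (rule sm[where b=5]) (simp_all add: upt_rec)
  have p43: "prime (43::nat)" by (rule sm[where b=7]) (simp_all add: upt_rec)
  have p83: "prime (83::nat)" by (rule sm[where b=10]) (simp_all add: upt_rec)
  have p163: "prime (163::nat)" by (rule sm[where b=13]) (simp_all add: upt_rec)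
  have p317: "prime (317::nat)" by (rule sm[where b=18]) (simp_all add: upt_rec)
  have p631: "prime (631::nat)" by (rule sm[where b=26]) (simp_all add: upt_rec)
  show ?thesis
  proof (cases "n < 2")
    case True thus ?thesis using assms by (intro bstep[OF p2, of 1]) auto
  next
    case c2: False show ?thesis
  proof (cases "n < 3")
    case True thus ?thesis using c2 by (intro bstep[OF p3, of 2]) auto
  next
    case c3: False show ?thesis
  proof (cases "n < 5")
    case True thus ?thesis using c3 by (intro bstep[OF p5, of 3]) auto
  next
    case c5: False show ?thesis
  proof (cases "n < 7")
    case True thus ?thesis using c5 by (intro bstep[OF p7, of 5]) auto
  next
    case c7: False show ?thesis
  proof (cases "n < 13")
    case True thus ?thesis using c7 by (intro bstep[OF p13, of 7]) auto
  next
    case c13: False show ?thesis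
  proof (cases "n < 23")
    case True thus ?thesis using c13 by (intro bstep[OF p23, of 13]) auto
  next
    case c23: False show ?thesis
  proof (cases "n < 43")
    case True thus ?thesis using c23 by (intro bstep[OF p43, of 23]) auto
  next
    case c43: False show ?thesis
  proof (cases "n < 83")
    case True thus ?thesis using c43 by (intro bstep[OF p83, of 43]) auto
  next
    case c83: False show ?thesis
  proof (cases "n < 163")
    case True thus ?thesis using c83 by (intro bstep[OF p163, of 83]) auto
  next
    case c163: False show ?thesis
  proof (cases "n < 317")
    case True thus ?thesis using c163 by (intro bstep[OF p317, of 163]) auto
  next
    case c317: False show ?thesis
  proof (cases "n < 631")
    case True thus ?thesis using c317 by (intro bstep[OF p631, of 317]) auto
  next
    case False thus ?thesis by (intro bertrand_large) simp
  qed qed qed qed qed qed qed qed qed qed qed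
qed

lemma not_dvd_binom:
  fixes p n k :: nat
  assumes p: "prime p" and k: "0 < k" and nd: "\<not> p dvd (n choose k)"
  shows "p ^ multiplicity p n dvd k"
proof -
  have "p ^ multiplicity p n dvd n" by (rule multiplicity_dvd)
  hence "p ^ multiplicity p n dvd n * ((n - 1) choose (k - 1))" by simp
  hence "p ^ multiplicity p n dvd k * (n choose k)" using times_binomial_minus1_eq[OF k, of n] by simp
  moreover have "coprime (p ^ multiplicity p n) (n choose k)"
    using p nd by (simp add: prime_imp_coprime)
  ultimately show ?thesis using coprime_dvd_mult_left_iff by blast
qed

lemma q_not_factor:
  fixes n q :: nat
  assumes q: "prime q" "q < n" "\<forall>r. prime r \<and> r < n \<longrightarrow> r \<le> q" and dv: "q dvd n"
  shows False
proof -
  obtain c where c: "n = q * c" using dv by blast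
  have "q \<ge> 2" using q prime_ge_2_nat by blast
  have "c \<noteq> 0" using c q(2) by (metis mult_0_right not_less0)
  moreover have "c \<noteq> 1" using c q(2) by (metis mult.right_neutral less_irrefl)
  ultimately have "c \<ge> 2" by linarith
  hence "2 * q \<le> n" using c by simp
  obtain p where p: "prime p" "q < p" "p \<le> 2 * q" using bertrand[of q] \<open>q \<ge> 2\<close> by auto
  have "p \<noteq> 2 * q"
  proof
    assume "p = 2 * q"
    with p(1) have "prime (2 * q)" by simp
    from prime_product[OF this] have "q = 1" by simp
    with \<open>q \<ge> 2\<close> show False by simp
  qed
  hence "p < n" using p \<open>2 * q \<le> n\<close> by simp
  with q(3) p(1) have "p \<le> q" by blast
  with p(2) show False by simp
qed

theorem mainTheorem13:
  fixes n p1 p2 q1 :: nat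
  assumes "n > 0"
    and "card (prime_factors n) \<ge> 2"
    and "prime q1" and "q1 < n" and "\<forall>q. prime q \<and> q < n \<longrightarrow> q \<le> q1"
    and "p1 \<in> prime_factors n" and "p2 \<in> prime_factors n" and "p1 \<noteq> p2"
    and "\<forall>p\<in>prime_factors n. p ^ multiplicity p n \<le> p1 ^ multiplicity p1 n"
    and "\<forall>p\<in>prime_factors n. p \<noteq> p1 \<longrightarrow> p ^ multiplicity p n \<le> p2 ^ multiplicity p2 n"
    and "p1 ^ multiplicity p1 n * p2 ^ multiplicity p2 n > n - q1"
  shows "cond1_var n 3 {p1, p2, q1}"
proof -
  have pp1: "prime p1" "p1 dvd n" using assms(6) by auto
  have pp2: "prime p2" "p2 dvd n" using assms(7) by auto
  have "q1 \<noteq> p1" using q_not_factor[OF assms(3,4,5)] pp1 by auto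
  moreover have "q1 \<noteq> p2" using q_not_factor[OF assms(3,4,5)] pp2 by auto
  ultimately have card: "card {p1, p2, q1} = 3" using assms(8) by simp
  define P where "P = p1 ^ multiplicity p1 n * p2 ^ multiplicity p2 n"
  have cop: "coprime (p1 ^ multiplicity p1 n) (p2 ^ multiplicity p2 n)"
    using pp1 pp2 assms(8) by (simp add: primes_coprime)
  have main: "\<exists>p\<in>{p1, p2, q1}. p dvd (n choose k)" if k: "1 \<le> k" "k \<le> n - 1" for k
  proof (rule ccontr)
    assume "\<not> ?thesis"
    hence nd: "\<not> p1 dvd (n choose k)" "\<not> p2 dvd (n choose k)" "\<not> q1 dvd (n choose k)" by auto
    have kn: "0 < k" "k < n" using k assms(1) by auto
    have "P dvd k" unfolding P_def
      using not_dvd_binom[OF pp1(1) kn(1) nd(1)] not_dvd_binom[OF pp2(1) kn(1) nd(2)] cop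
      by (simp add: divides_mult)
    hence "P \<le> k" using kn by (simp add: dvd_imp_le)
    have nd': "\<not> p1 dvd (n choose (n - k))" "\<not> p2 dvd (n choose (n - k))"
    proof -
      have "n choose (n - k) = n choose k" using binomial_symmetric[of k n] kn by simp
      thus "\<not> p1 dvd (n choose (n - k))" "\<not> p2 dvd (n choose (n - k))" using nd by simp_all
    qed
    have "P dvd (n - k)" unfolding P_def
      using not_dvd_binom[OF pp1(1) _ nd'(1)] not_dvd_binom[OF pp2(1) _ nd'(2)] cop kn
      by (simp add: divides_mult)
    hence "P \<le> n - k" using kn by (simp add: dvd_imp_le)
    have "P > n - q1" using assms(11) unfolding P_def .
    have "k < q1" "n - k < q1" using \<open>P \<le> k\<close> \<open>P \<le> n - k\<close> \<open>P > n - q1\<close> assms(4) by linarith+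
    have fl: "fact k * fact (n - k) * (n choose k) = (fact n :: nat)"
      using kn by (intro binomial_fact_lemma) simp
    have "q1 dvd (fact n :: nat)" using assms(3,4) prime_dvd_fact_iff[of q1 n] by simp
    hence "q1 dvd fact k * fact (n - k) * (n choose k)" using fl by simp
    moreover have "\<not> q1 dvd (fact k :: nat)" "\<not> q1 dvd (fact (n - k) :: nat)"
      using assms(3) prime_dvd_fact_iff[of q1 k] prime_dvd_fact_iff[of q1 "n - k"]
        \<open>k < q1\<close> \<open>n - k < q1\<close> by auto
    ultimately show False using nd(3) assms(3) by (simp add: prime_dvd_mult_iff)
  qed
  show ?thesis unfolding cond1_var_def
    using card main pp1 pp2 assms(3) by auto
qed
end
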